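(* Let $q\ge 2$ be a prime power and $m\ge1$ an integer, and let $H_m=\sum_{k=1}^m \frac1k$ be the $m$-th harmonic number. Then $$\prod_{\deg p\le m}\left(1+\frac{1}{|p|}\right)<\exp(H_m),$$ where the product runs over all monic irreducible polynomials $p\in\mathbb{F}_q[x]$ of degree at most $m$.
   Context: For $f\in\mathbb{F}_q[x]$, $|f|=q^{\deg f}$. *)

theory Defs
  imports "HOL-Analysis.Analysis" "HOL-Computational_Algebra.Polynomial_Factorial"
begin

definition poly_abs :: "'a::{finite,field} poly \<Rightarrow> real" where
  "poly_abs f = real (CARD('a)) ^ degree f"

end

theory Submission
  imports Defs
begin

definition Bd :: "nat \<Rightarrow> 'a::zero poly set" where
  "Bd n = {g. \<forall>i\<ge>n. coeff g i = 0}"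

lemma Bd_0: "Bd 0 = {0}"
  by (auto simp: Bd_def poly_eq_iff)

lemma Bd_Suc: "Bd (Suc n) = (\<lambda>(a,g). pCons a g) ` (UNIV \<times> Bd n)"
proof (rule set_eqI, rule iffI)
  fix f :: "'a poly" assume f: "f \<in> Bd (Suc n)"
  obtain a g where fg: "f = pCons a g" by (cases f)
  have "g \<in> Bd n" using f unfolding fg Bd_def by (auto simp: coeff_pCons split: nat.splits)
  thus "f \<in> (\<lambda>(a,g). pCons a g) ` (UNIV \<times> Bd n)" using fg by auto
next
  fix f :: "'a poly" assume "f \<in> (\<lambda>(a,g). pCons a g) ` (UNIV \<times> Bd n)"
  then show "f \<in> Bd (Suc n)" by (auto simp: Bd_def coeff_pCons split: nat.splits)
qed

lemma Bd_card: "finite (Bd n :: 'a::{finite,zero} poly set) \<and> card (Bd n :: 'a poly set) = CARD('a) ^ n"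
proof (induction n)
  case 0 then show ?case by (simp add: Bd_0)
next
  case (Suc n)
  have inj: "inj_on (\<lambda>(a,g). pCons a g) (UNIV \<times> (Bd n :: 'a poly set))"
    by (auto simp: inj_on_def)
  show ?case unfolding Bd_Suc using Suc inj
    by (simp add: card_image card_cartesian_product)
qed

definition Mon :: "nat \<Rightarrow> 'a::field poly set" where
  "Mon n = {f. lead_coeff f = 1 \<and> degree f = n}"

lemma Mon_eq: "Mon n = (\<lambda>g. monom 1 n + g) ` (Bd n :: 'a::field poly set)"
proof (rule set_eqI, rule iffI)
  fix f :: "'a poly" assume f: "f \<in> Mon n"
  have "f - monom 1 n \<in> Bd n" using f unfolding Mon_def Bd_def
    by (auto simp: coeff_monom coeff_eq_0)
  moreover have "f = monom 1 n + (f - monom 1 n)" by simp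
  ultimately show "f \<in> (\<lambda>g. monom 1 n + g) ` Bd n" by blast
next
  fix f :: "'a poly" assume "f \<in> (\<lambda>g. monom 1 n + g) ` Bd n"
  then obtain g where g: "g \<in> Bd n" "f = monom 1 n + g" by auto
  have c: "coeff f n = 1" using g by (simp add: Bd_def)
  have d: "degree f = n"
  proof (rule antisym)
    show "degree f \<le> n" using g by (intro degree_le) (auto simp: Bd_def coeff_monom)
    show "n \<le> degree f" using c by (intro le_degree) simp
  qed
  show "f \<in> Mon n" using c d by (simp add: Mon_def)
qed

lemma Mon_card: "finite (Mon n :: 'a::{finite,field} poly set) \<and> card (Mon n :: 'a poly set) = CARD('a) ^ n"
proof -
  have "inj_on (\<lambda>g. monom 1 n + g) (Bd n :: 'a poly set)" by (auto simp: inj_on_def)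
  thus ?thesis unfolding Mon_eq using Bd_card[where 'a='a] by (simp add: card_image)
qed

lemma Mon_dvd_card:
  fixes p :: "'a::{finite,field} poly"
  assumes p: "lead_coeff p = 1" "degree p \<le> N"
  shows "card {f \<in> Mon N. p dvd f} = CARD('a) ^ (N - degree p)"
proof -
  have p0: "p \<noteq> 0" using p by auto
  have "{f \<in> Mon N. p dvd f} = (\<lambda>g. p * g) ` Mon (N - degree p)"
  proof (rule set_eqI, rule iffI)
    fix f assume f: "f \<in> {f \<in> Mon N. p dvd f}"
    then obtain g where g: "f = p * g" by auto
    have g0: "g \<noteq> 0" using f g by (auto simp: Mon_def)
    have "lead_coeff g = 1" using f g p by (simp add: Mon_def lead_coeff_mult)
    moreover have "degree g = N - degree p" using f g p0 g0 by (auto simp add: Mon_def degree_mult_eq)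
    ultimately show "f \<in> (\<lambda>g. p * g) ` Mon (N - degree p)" using g by (auto simp: Mon_def)
  next
    fix f assume "f \<in> (\<lambda>g. p * g) ` Mon (N - degree p)"
    then obtain g where g: "g \<in> Mon (N - degree p)" "f = p * g" by auto
    have g0: "g \<noteq> 0" using g by (auto simp: Mon_def)
    have lg: "lead_coeff g = 1" using g(1) unfolding Mon_def by blast
    have "lead_coeff f = lead_coeff p * lead_coeff g" using g by (simp only: lead_coeff_mult)
    hence "lead_coeff f = 1" using lg p by simp
    moreover have "degree f = N" using g p p0 g0
      by (auto simp: Mon_def degree_mult_eq)
    ultimately show "f \<in> {f \<in> Mon N. p dvd f}" using g by (auto simp: Mon_def)
  qed
  moreover have "inj_on (\<lambda>g. p * g) (Mon (N - degree p))" using p0 by (auto simp: inj_on_def)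
  ultimately show ?thesis using Mon_card[where 'a='a] by (simp add: card_image)
qed

lemma irr_deg: "irreducible (p :: 'a::field poly) \<Longrightarrow> degree p \<ge> 1"
  using is_unit_iff_degree[of p] irreducible_not_unit[of p] by (cases "p = 0") auto

definition Irr :: "nat \<Rightarrow> 'a::field poly set" where
  "Irr N = {p. lead_coeff p = 1 \<and> irreducible p \<and> degree p \<le> N}"

lemma Irr_finite: "finite (Irr N :: 'a::{finite,field} poly set)"
proof -
  have "Irr N \<subseteq> (\<Union>n\<le>N. Mon n)" by (auto simp: Irr_def Mon_def)
  moreover have "finite (\<Union>n\<le>N. Mon n :: 'a poly set)" using Mon_card by auto
  ultimately show ?thesis by (rule finite_subset)
qed

lemma prime_dvd_prod_set:
  assumes "prime_elem (p :: 'b::comm_semiring_1)" "finite S"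
  shows "p dvd prod id S \<Longrightarrow> \<exists>s\<in>S. p dvd s"
  using assms(2)
proof (induction S rule: finite_induct)
  case empty then show ?case using assms(1) by (simp add: prime_elem_not_unit)
next
  case (insert x S)
  then have "p dvd x * prod id S" by simp
  then have "p dvd x \<or> p dvd prod id S" using assms(1) by (simp add: prime_elem_dvd_mult_iff)
  then show ?case using insert by auto
qed

lemma monic_irr_dvd_eq:
  fixes p s :: "'a::field poly"
  assumes "irreducible p" "irreducible s" "lead_coeff p = 1" "lead_coeff s = 1" "p dvd s"
  shows "p = s"
proof -
  obtain k where k: "s = p * k" using assms(5) by (elim dvdE)
  have "is_unit p \<or> is_unit k" using irreducibleD[OF assms(2) k] .
  hence u: "is_unit k" using assms(1) irreducible_not_unit by blast
  have k0: "k \<noteq> 0" using u by auto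
  have dk: "degree k = 0" using u k0 is_unit_iff_degree by blast
  have "lead_coeff s = lead_coeff p * lead_coeff k" unfolding k by (simp only: lead_coeff_mult)
  hence "lead_coeff k = 1" using assms(3,4) by simp
  moreover obtain a where ka: "k = [:a:]" using dk by (rule degree_eq_zeroE)
  ultimately have "k = 1" by (simp add: one_pCons)
  thus ?thesis using k by simp
qed

lemma prod_irr_dvd:
  fixes f :: "'a::field poly"
  assumes "finite S"
  shows "(\<forall>p\<in>S. irreducible p \<and> lead_coeff p = 1 \<and> p dvd f) \<Longrightarrow> prod id S dvd f"
  using assms
proof (induction S rule: finite_induct)
  case empty then show ?case by simp
next
  case (insert x S)
  have xi: "irreducible x" "lead_coeff x = 1" "x dvd f" using insert.prems by auto
  have "prod id S dvd f" using insert by auto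
  then obtain g where g: "f = prod id S * g" by (elim dvdE)
  have px: "prime_elem x" using xi(1) by (rule field_poly_irreducible_imp_prime)
  have "\<not> x dvd prod id S"
  proof
    assume "x dvd prod id S"
    then obtain s where s: "s \<in> S" "x dvd s" using prime_dvd_prod_set[OF px insert.hyps(1)] by blast
    have "x = s" using monic_irr_dvd_eq[OF xi(1) _ xi(2) _ s(2)] s(1) insert.prems by auto
    thus False using s(1) insert.hyps(2) by simp
  qed
  have "x dvd prod id S * g" using xi(3) g by simp
  hence "x dvd g" using prime_elem_dvd_multD[OF px] \<open>\<not> x dvd prod id S\<close> by blast
  then obtain h where "g = x * h" by (elim dvdE)
  hence "f = (x * prod id S) * h" using g by (simp add: mult.assoc mult.left_commute)
  thus ?case using insert.hyps by simp
qed

lemma div_sum: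
  fixes f :: "'a::{finite,field} poly"
  assumes f: "f \<in> Mon N"
  shows "(\<Sum>p\<in>{p \<in> Irr N. p dvd f}. degree p) \<le> N"
proof -
  let ?S = "{p \<in> Irr N. p dvd f}"
  have f0: "f \<noteq> 0" and fN: "degree f = N" using f by (auto simp: Mon_def)
  have fin: "finite ?S" by (rule finite_subset[OF _ Irr_finite]) auto
  have "prod id ?S dvd f"
    by (rule prod_irr_dvd[OF fin]) (auto simp: Irr_def)
  hence "degree (prod id ?S) \<le> degree f" using f0 by (rule dvd_imp_degree_le)
  moreover have "degree (prod id ?S) = (\<Sum>p\<in>?S. degree p)"
    by (subst degree_prod_sum_eq) (auto simp: Irr_def)
  ultimately show ?thesis using fN by simp
qed

lemma cheb_nat:
  "(\<Sum>p\<in>(Irr N :: 'a::{finite,field} poly set). degree p * CARD('a) ^ (N - degree p)) \<le> N * CARD('a) ^ N"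
proof -
  have "(\<Sum>p\<in>(Irr N :: 'a poly set). degree p * CARD('a) ^ (N - degree p))
      = (\<Sum>p\<in>Irr N. \<Sum>f\<in>{f. f \<in> Mon N \<and> p dvd f}. degree (p :: 'a poly))"
  proof (rule sum.cong[OF refl])
    fix p :: "'a poly" assume "p \<in> Irr N"
    thus "degree p * CARD('a) ^ (N - degree p) = (\<Sum>f\<in>{f. f \<in> Mon N \<and> p dvd f}. degree p)"
      using Mon_dvd_card[of p N] by (simp add: Irr_def)
  qed
  also have "\<dots> = (\<Sum>f\<in>(Mon N :: 'a poly set). \<Sum>p\<in>{p. p \<in> Irr N \<and> p dvd f}. degree p)"
    by (rule sum.swap_restrict) (use Irr_finite Mon_card in auto)
  also have "\<dots> \<le> (\<Sum>f\<in>(Mon N :: 'a poly set). N)"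
    by (intro sum_mono) (use div_sum in auto)
  also have "\<dots> = N * CARD('a) ^ N" using Mon_card[where 'a='a] by simp
  finally show ?thesis .
qed

lemma cheb_real:
  "(\<Sum>p\<in>Irr N. real (degree p) / poly_abs (p :: 'a::{finite,field} poly)) \<le> real N"
proof -
  define q where "q = real CARD('a)"
  have q0: "q > 0" by (simp add: q_def)
  have "(\<Sum>p\<in>Irr N. real (degree p) / poly_abs (p :: 'a poly))
      = (\<Sum>p\<in>(Irr N :: 'a poly set). real (degree p * CARD('a) ^ (N - degree p))) / q ^ N"
    unfolding sum_divide_distrib
  proof (rule sum.cong[OF refl])
    fix p :: "'a poly" assume "p \<in> Irr N"
    hence d: "degree p \<le> N" by (simp add: Irr_def)
    have "q ^ N = q ^ degree p * q ^ (N - degree p)" using d by (simp flip: power_add)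
    thus "real (degree p) / poly_abs p = real (degree p * CARD('a) ^ (N - degree p)) / q ^ N"
      using q0 by (simp add: poly_abs_def q_def)
  qed
  also have "\<dots> \<le> real (N * CARD('a) ^ N) / q ^ N"
    unfolding of_nat_sum[symmetric] using q0 cheb_nat[where 'a='a, of N]
    by (intro divide_right_mono) (simp_all only: of_nat_le_iff, simp)
  also have "\<dots> = real N" using q0 by (simp add: q_def)
  finally show ?thesis .
qed


lemma harm_shift: "1 + (\<Sum>n=1..k. 1 / (real n + 1)) = (harm (Suc k) :: real)"
proof (induction k)
  case 0 then show ?case by (simp add: harm_def)
next
  case (Suc k)
  have "1 + (\<Sum>n=1..Suc k. 1 / (real n + 1)) = 1 + (\<Sum>n=1..k. 1 / (real n + 1)) + 1 / (real (Suc k) + 1)"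
    by simp
  also have "\<dots> = harm (Suc k) + 1 / (real (Suc k) + 1)" using Suc.IH by simp
  also have "\<dots> = harm (Suc (Suc k))" by (simp add: harm_Suc inverse_eq_divide add.commute)
  finally show ?case .
qed

lemma aux_id:
  assumes a: "(a::real) \<ge> 0"
  shows "S / (a + 1) + c = (S + (a + 2) * c) / (a + 2) + S / ((a + 1) * (a + 2))"
proof -
  have h1: "a + 1 \<noteq> 0" "a + 2 \<noteq> 0" using a by auto
  have h3: "a * a + (2 + a * 3) \<noteq> 0" using a by (smt (verit) mult_nonneg_nonneg)
  have "S / (a + 1) = (S * (a + 2)) / ((a + 1) * (a + 2))" using h1 by simp
  moreover have "(S + (a + 2) * c) / (a + 2) = S / (a + 2) + c" using h1 by (simp add: add_divide_distrib)
  moreover have "S / (a + 2) = (S * (a + 1)) / ((a + 1) * (a + 2))" using h1 by simp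
  ultimately show ?thesis by (simp add: add_divide_distrib[symmetric] algebra_simps)
qed

lemma abel_id:
  fixes c :: "nat \<Rightarrow> real"
  defines "S \<equiv> \<lambda>N. (\<Sum>n=1..N. real n * c n)"
  shows "(\<Sum>n=1..Suc k. c n) = S (Suc k) / real (Suc k) + (\<Sum>n=1..k. S n / (real n * (real n + 1)))"
proof (induction k)
  case 0 then show ?case by (simp add: S_def)
next
  case (Suc k)
  have e1: "S (Suc (Suc k)) = S (Suc k) + real (Suc (Suc k)) * c (Suc (Suc k))" by (simp add: S_def)
  have "(\<Sum>n=1..Suc (Suc k). c n) = (\<Sum>n=1..Suc k. c n) + c (Suc (Suc k))" by simp
  also have "\<dots> = S (Suc k) / real (Suc k) + (\<Sum>n=1..k. S n / (real n * (real n + 1))) + c (Suc (Suc k))"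
    using Suc by simp
  also have "\<dots> = S (Suc (Suc k)) / real (Suc (Suc k)) + ((\<Sum>n=1..k. S n / (real n * (real n + 1)))
       + S (Suc k) / (real (Suc k) * (real (Suc k) + 1)))"
    unfolding e1 using aux_id[of "real k" "S (Suc k)" "c (Suc (Suc k))"] by (simp add: add_ac)
  also have "\<dots> = S (Suc (Suc k)) / real (Suc (Suc k)) + (\<Sum>n=1..Suc k. S n / (real n * (real n + 1)))"
    by simp
  finally show ?case .
qed

lemma abel:
  fixes c :: "nat \<Rightarrow> real"
  assumes S: "\<And>N. (\<Sum>n=1..N. real n * c n) \<le> real N"
  shows "(\<Sum>n=1..m. c n) \<le> harm m"
proof (cases m)
  case 0 then show ?thesis by (simp add: harm_def)
next
  case (Suc k)
  define T where "T = (\<lambda>N. (\<Sum>n=1..N. real n * c n))"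
  have "(\<Sum>n=1..Suc k. c n) = T (Suc k) / real (Suc k) + (\<Sum>n=1..k. T n / (real n * (real n + 1)))"
    unfolding T_def by (rule abel_id)
  also have "\<dots> \<le> 1 + (\<Sum>n=1..k. 1 / (real n + 1))"
  proof (rule add_mono)
    show "T (Suc k) / real (Suc k) \<le> 1" using S[of "Suc k"] by (simp add: T_def)
    show "(\<Sum>n=1..k. T n / (real n * (real n + 1))) \<le> (\<Sum>n=1..k. 1 / (real n + 1))"
    proof (rule sum_mono)
      fix n assume n: "n \<in> {1..k}"
      have "T n / (real n * (real n + 1)) \<le> real n / (real n * (real n + 1))"
        using S[of n] n by (intro divide_right_mono) (auto simp: T_def)
      also have "\<dots> = 1 / (real n + 1)" using n by simp
      finally show "T n / (real n * (real n + 1)) \<le> 1 / (real n + 1)" .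
    qed
  qed
  also have "\<dots> = harm (Suc k)" by (rule harm_shift)
  finally show ?thesis using Suc by simp
qed

lemma group_Irr:
  "(\<Sum>n=1..N. \<Sum>p\<in>{p \<in> (Irr n :: 'a::{finite,field} poly set). degree p = n}. F p) = (\<Sum>p\<in>(Irr N :: 'a poly set). F p)"
proof -
  have "(\<Sum>p\<in>(Irr N :: 'a poly set). F p) = (\<Sum>n\<in>{1..N}. \<Sum>p\<in>{p. p \<in> Irr N \<and> degree p = n}. F p)"
    by (rule sum.group[symmetric]) (use Irr_finite irr_deg in \<open>auto simp: Irr_def\<close>)
  also have "\<dots> = (\<Sum>n=1..N. \<Sum>p\<in>{p \<in> (Irr n :: 'a poly set). degree p = n}. F p)"
    by (intro sum.cong refl) (auto simp: Irr_def)
  finally show ?thesis by simp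
qed

lemma one_plus_less_exp: "(y::real) > 0 \<Longrightarrow> 1 + y < exp y"
proof -
  assume y: "y > 0"
  have "1 + y / 2 \<le> exp (y / 2)" by (rule exp_ge_add_one_self)
  hence "(1 + y / 2)^2 \<le> exp (y / 2)^2" using y by (intro power_mono) auto
  also have "exp (y / 2)^2 = exp y" by (simp add: power2_eq_square flip: exp_add)
  finally have "(1 + y / 2)^2 \<le> exp y" .
  moreover have "1 + y < (1 + y / 2)^2" using y by (simp add: power2_eq_square field_simps)
  ultimately show ?thesis by simp
qed

lemma prod_less_exp:
  fixes x :: "'b \<Rightarrow> real"
  assumes A: "finite A" "a \<in> A" and pos: "\<And>p. p \<in> A \<Longrightarrow> x p > 0"
  shows "(\<Prod>p\<in>A. 1 + x p) < exp (sum x A)"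
proof -
  have h: "0 \<le> 1 + x p \<and> 1 + x p \<le> exp (x p)" if "p \<in> A" for p
  proof -
    have "x p > 0" using pos that .
    thus ?thesis using exp_ge_add_one_self[of "x p"] by simp
  qed
  have le: "(\<Prod>p\<in>A - {a}. 1 + x p) \<le> exp (sum x (A - {a}))"
    unfolding exp_sum[OF finite_Diff[OF A(1)]]
    by (intro prod_mono) (use h in auto)
  have "(\<Prod>p\<in>A. 1 + x p) = (1 + x a) * (\<Prod>p\<in>A - {a}. 1 + x p)"
    using A by (simp add: prod.remove)
  also have "\<dots> \<le> (1 + x a) * exp (sum x (A - {a}))"
    using le pos[OF A(2)] by (intro mult_left_mono) auto
  also have "\<dots> < exp (x a) * exp (sum x (A - {a}))"
    using one_plus_less_exp[OF pos[OF A(2)]] by simp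
  also have "\<dots> = exp (sum x A)" using A by (simp add: sum.remove exp_add)
  finally show ?thesis .
qed

theorem lemma2:
  fixes m :: nat
  assumes "m \<ge> 1"
  shows "(\<Prod>p \<in> {p :: 'a::{finite,field} poly. lead_coeff p = 1 \<and> irreducible p \<and> degree p \<le> m}.
            1 + 1 / poly_abs p) < exp (harm m :: real)"
proof -
  let ?P = "{p :: 'a poly. lead_coeff p = 1 \<and> irreducible p \<and> degree p \<le> m}"
  have PI: "?P = Irr m" by (simp add: Irr_def)
  define c where "c n = (\<Sum>p\<in>{p \<in> (Irr n :: 'a poly set). degree p = n}. 1 / poly_abs p)" for n
  have x1: "[:0, 1:] \<in> ?P" using assms by (auto intro: irreducible_linear_field_poly)
  have pos: "1 / poly_abs p > 0" for p :: "'a poly" by (simp add: poly_abs_def)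
  have "(\<Prod>p\<in>?P. 1 + 1 / poly_abs p) < exp (\<Sum>p\<in>?P. 1 / poly_abs p)"
    by (rule prod_less_exp[OF _ x1]) (use Irr_finite pos in \<open>auto simp: PI\<close>)
  also have "(\<Sum>p\<in>?P. 1 / poly_abs p) = (\<Sum>n=1..m. c n)"
    unfolding PI c_def by (rule group_Irr[symmetric])
  also have "\<dots> \<le> harm m"
  proof (rule abel)
    fix N
    have "(\<Sum>n=1..N. real n * c n)
        = (\<Sum>n=1..N. \<Sum>p\<in>{p \<in> (Irr n :: 'a poly set). degree p = n}. real (degree p) / poly_abs p)"
      unfolding c_def sum_distrib_left by (intro sum.cong refl) auto
    also have "\<dots> = (\<Sum>p\<in>(Irr N :: 'a poly set). real (degree p) / poly_abs p)"
      by (rule group_Irr)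
    also have "\<dots> \<le> real N" by (rule cheb_real)
    finally show "(\<Sum>n=1..N. real n * c n) \<le> real N" .
  qed
  finally show ?thesis by simp
qed

end
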